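(* Let $c>0$, $\epsilon>0$, $\delta\in(0,1)$, let $N\ge1$ be an integer, let $m\ge2$ be an integer and $\hat v\ge0$. Put $L=\ln(3N/\delta)$, $\kappa=\frac13+\frac1{2L}$, $$\epsilon^{\hat v}=\frac{2c^2L}{3m}+\sqrt{\kappa\Big(\frac{c^2L}{m-1}\Big)^2+\frac{2c^2\hat vL}{m}},\qquad \epsilon^{\hat B}=\frac{cL}{3m}+\sqrt{\frac{2(\hat v+\epsilon^{\hat v})L}{m}}.$$ If $\epsilon^{\hat B}\le\epsilon$, then $m>\Big(\frac13+\sqrt{\frac{4+2\sqrt3}{3}}\Big)\cdot\frac{cL}{\epsilon}$.
   Context: In the paper, $N=|\mathcal{I}|$ is the number of (player, pure profile) utility indices, $m$ is the number of samples of a given utility, $\hat v$ is their sample variance, $c$ bounds the range of sampled utilities, and $\epsilon^{\hat B}$ is the empirical Bennett deviation bound for the empirical mean. *)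

theory Defs
  imports Complex_Main
begin

end

theory Submission
  imports Defs
begin

theorem lemma7:
  fixes c eps delta v_hat :: real and N m :: nat
  assumes "c > 0" and "eps > 0" and "0 < delta" and "delta < 1"
    and "N \<ge> 1" and "m \<ge> 2" and "v_hat \<ge> 0"
  defines "L \<equiv> ln (3 * real N / delta)"
  defines "kappa \<equiv> 1/3 + 1 / (2 * L)"
  defines "eps_v \<equiv> 2 * c^2 * L / (3 * real m)
             + sqrt (kappa * (c^2 * L / (real m - 1))^2 + 2 * c^2 * v_hat * L / real m)"
  defines "eps_B \<equiv> c * L / (3 * real m) + sqrt (2 * (v_hat + eps_v) * L / real m)"
  assumes "eps_B \<le> eps"
  shows "real m > (1/3 + sqrt ((4 + 2 * sqrt 3) / 3)) * (c * L / eps)"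
proof -
  define M where "M = real m"
  have M2: "M \<ge> 2" using assms(6) unfolding M_def by simp
  have "3 * real N / delta > 1"
  proof -
    have "3 * real N \<ge> 3" using assms(5) by simp
    hence "3 * real N > delta" using assms(4) by simp
    thus ?thesis using assms(3) by simp
  qed
  hence Lpos: "L > 0" unfolding L_def by simp
  have kap: "kappa \<ge> 1/3" unfolding kappa_def using Lpos by simp
  define B where "B = c^2 * L / (M - 1)"
  have Bpos: "B > 0" unfolding B_def using M2 Lpos assms(1) by simp
  have BM: "B > c^2 * L / M" unfolding B_def using M2 Lpos assms(1)
    by (intro divide_strict_left_mono) auto
  have s3: "sqrt 3 > 0" by simp
  have "kappa * B^2 + 2 * c^2 * v_hat * L / M \<ge> (B / sqrt 3)^2"
  proof -
    have "(B / sqrt 3)^2 = B^2/3" by (simp add: power_divide)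
    also have "\<dots> \<le> kappa * B^2" using kap mult_right_mono[OF kap, of "B^2"] by simp
    also have "\<dots> \<le> kappa * B^2 + 2 * c^2 * v_hat * L / M"
      using assms(7) Lpos M2 by simp
    finally show ?thesis .
  qed
  hence "sqrt (kappa * B^2 + 2 * c^2 * v_hat * L / M) \<ge> B / sqrt 3"
    using real_le_rsqrt by blast
  moreover have "B / sqrt 3 > (c^2 * L / M) / sqrt 3"
    using divide_strict_right_mono[OF BM s3] by simp
  ultimately have "sqrt (kappa * B^2 + 2 * c^2 * v_hat * L / M) > (c^2 * L / M) / sqrt 3"
    by linarith
  moreover have "eps_v = 2 * c^2 * L / (3 * M) + sqrt (kappa * B^2 + 2 * c^2 * v_hat * L / M)"
    unfolding eps_v_def B_def M_def ..
  moreover have "(c^2 * L / M) * (2/3 + 1 / sqrt 3) = 2 * c^2 * L / (3 * M) + (c^2 * L / M) / sqrt 3"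
    by (simp add: distrib_left)
  ultimately have ev: "eps_v > (c^2 * L / M) * (2/3 + 1 / sqrt 3)"
    by linarith
  define A where "A = c * L / M"
  have Apos: "A > 0" unfolding A_def using M2 Lpos assms(1) by simp
  have q: "2 * (2/3 + 1 / sqrt 3) = (4 + 2 * sqrt 3) / 3"
  proof -
    have e: "sqrt 3 * sqrt 3 = (3::real)" by simp
    have "1 / sqrt 3 = sqrt 3 / 3"
      by (simp add: field_simps e)
    thus ?thesis by simp
  qed
  define s where "s = sqrt ((4 + 2 * sqrt 3) / 3)"
  define k where "k = 2/3 + 1 / sqrt 3"
  have "2 * (v_hat + eps_v) * L / M \<ge> 2 * eps_v * L / M"
    using assms(7) Lpos M2 by (intro divide_right_mono mult_right_mono) auto
  moreover have "2 * eps_v * L / M > 2 * ((c^2 * L / M) * k) * L / M"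
    using ev Lpos M2 unfolding k_def by (intro divide_strict_right_mono mult_strict_right_mono) auto
  moreover have "2 * ((c^2 * L / M) * k) * L / M = A^2 * (2 * k)"
    unfolding A_def by (simp add: power2_eq_square power_divide)
  moreover have "A^2 * (2 * k) = A^2 * ((4 + 2 * sqrt 3) / 3)"
    using q unfolding k_def by simp
  ultimately have "2 * (v_hat + eps_v) * L / M > A^2 * ((4 + 2 * sqrt 3) / 3)"
    by linarith
  hence "sqrt (2 * (v_hat + eps_v) * L / M) > sqrt (A^2 * ((4 + 2 * sqrt 3) / 3))"
    by (simp only: real_sqrt_less_iff)
  also have "sqrt (A^2 * ((4 + 2 * sqrt 3) / 3)) = A * s"
    using Apos unfolding s_def by (simp only: real_sqrt_mult real_sqrt_abs abs_of_pos)
  finally have sB: "sqrt (2 * (v_hat + eps_v) * L / M) > A * s" .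
  have "eps_B = A / 3 + sqrt (2 * (v_hat + eps_v) * L / M)"
    unfolding eps_B_def A_def M_def by simp
  hence "eps > A / 3 + A * s" using sB assms(12) by linarith
  moreover have "A / 3 + A * s = (1/3 + s) * (c * L) / M" unfolding A_def by (simp add: add_divide_distrib algebra_simps)
  ultimately have "(1/3 + s) * (c * L) / M < eps" by linarith
  hence "(1/3 + s) * (c * L) < eps * M" using M2 by (simp add: pos_divide_less_eq)
  hence "(1/3 + s) * (c * L) / eps < M" using assms(2) by (simp add: pos_divide_less_eq mult.commute)
  thus ?thesis unfolding M_def s_def by simp
qed

end
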